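(* There exists $p\in\mathcal{P}$ such that $\mathrm{Stab}_{G^*}(p)=\langle\varphi\rangle$ for some $2n$-cycle $\varphi\in\mathrm{Sym}(I)$.
   Context: Fix $n\ge 2$, $W=\{1,\dots,n\}$, $M=\{n+1,\dots,2n\}$, $I=W\cup M$. Permutations compose right-to-left. A preference profile is a function $p$ on $I$ assigning to each $x\in W$ a linear order $p(x)$ on $M$ and to each $y\in M$ a linear order $p(y)$ on $W$; $\mathcal{P}$ is the set of preference profiles. $G^*=\{\varphi\in\mathrm{Sym}(I):\{\varphi(W),\varphi(M)\}=\{W,M\}\}$. For a linear order $R$ on $X\subseteq I$ and $\varphi\in\mathrm{Sym}(I)$, $\varphi R$ is the relation on $\varphi(X)$ with $(a,b)\in\varphi R$ iff $(\varphi^{-1}(a),\varphi^{-1}(b))\in R$. For $\varphi\in G^*$, $p^\varphi(z)=\varphi\,p(\varphi^{-1}(z))$, and $\mathrm{Stab}_{G^*}(p)=\{\varphi\in G^*:p^\varphi=p\}$. *)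

theory Defs
  imports Main "HOL-Combinatorics.Combinatorics"
begin

definition Wset :: "nat \<Rightarrow> nat set" where "Wset n = {1..n}"
definition Mset :: "nat \<Rightarrow> nat set" where "Mset n = {n+1..2*n}"
definition Iset :: "nat \<Rightarrow> nat set" where "Iset n = Wset n \<union> Mset n"

text \<open>Preference profiles. Outside I the value is fixed to the empty relation,
  so that profiles are determined by their values on I.\<close>
definition profiles :: "nat \<Rightarrow> (nat \<Rightarrow> nat rel) set" where
  "profiles n = {p. (\<forall>x\<in>Wset n. linear_order_on (Mset n) (p x))
                  \<and> (\<forall>y\<in>Mset n. linear_order_on (Wset n) (p y))
                  \<and> (\<forall>z. z \<notin> Iset n \<longrightarrow> p z = {})}"

definition Gstar :: "nat \<Rightarrow> (nat \<Rightarrow> nat) set" where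
  "Gstar n = {\<phi>. \<phi> permutes Iset n \<and> {\<phi> ` Wset n, \<phi> ` Mset n} = {Wset n, Mset n}}"

definition act_rel :: "(nat \<Rightarrow> nat) \<Rightarrow> nat rel \<Rightarrow> nat rel" where
  "act_rel \<phi> R = {(a, b). (inv \<phi> a, inv \<phi> b) \<in> R}"

definition act_profile :: "(nat \<Rightarrow> nat) \<Rightarrow> (nat \<Rightarrow> nat rel) \<Rightarrow> (nat \<Rightarrow> nat rel)" where
  "act_profile \<phi> p = (\<lambda>z. act_rel \<phi> (p (inv \<phi> z)))"

definition Stab :: "nat \<Rightarrow> (nat \<Rightarrow> nat rel) \<Rightarrow> (nat \<Rightarrow> nat) set" where
  "Stab n p = {\<phi> \<in> Gstar n. act_profile \<phi> p = p}"

definition gen_cyclic :: "(nat \<Rightarrow> nat) \<Rightarrow> (nat \<Rightarrow> nat) set" where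
  "gen_cyclic \<phi> = range (\<lambda>k. \<phi> ^^ k)"

definition is_full_cycle :: "nat \<Rightarrow> (nat \<Rightarrow> nat) \<Rightarrow> bool" where
  "is_full_cycle n \<phi> \<longleftrightarrow> (\<exists>cs. distinct cs \<and> length cs = 2 * n \<and> set cs = Iset n
                              \<and> \<phi> = cycle_of_list cs)"

end

theory Submission
  imports Defs
begin


definition cs :: "nat \<Rightarrow> nat list" where
  "cs n = map (\<lambda>j. if even j then j div 2 + 1 else n + j div 2 + 1) [0..<2*n]"

definition phi0 :: "nat \<Rightarrow> nat \<Rightarrow> nat" where
  "phi0 n x = (if x \<in> Wset n then n + x else if x \<in> Mset n then (if x = 2*n then 1 else x - n + 1) else x)"

lemma cs_len: "length (cs n) = 2*n" by (simp add: cs_def)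

lemma cs_nth: "j < 2*n \<Longrightarrow> cs n ! j = (if even j then j div 2 + 1 else n + j div 2 + 1)"
  by (simp add: cs_def)

lemma cs_set: "set (cs n) = Iset n"
proof
  show "set (cs n) \<subseteq> Iset n"
    by (auto simp: cs_def Iset_def Wset_def Mset_def)
next
  show "Iset n \<subseteq> set (cs n)"
  proof
    fix x assume x: "x \<in> Iset n"
    show "x \<in> set (cs n)"
    proof (cases "x \<le> n")
      case True
      then have "x \<ge> 1" using x by (auto simp: Iset_def Wset_def Mset_def)
      then have "cs n ! (2*(x-1)) = x" "2*(x-1) < 2*n" using True by (auto simp: cs_nth)
      then show ?thesis by (metis cs_len nth_mem)
    next
      case False
      then have "x \<le> 2*n" using x by (auto simp: Iset_def Wset_def Mset_def)
      then have "cs n ! (2*(x-n-1)+1) = x" "2*(x-n-1)+1 < 2*n" using False by (auto simp: cs_nth)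
      then show ?thesis by (metis cs_len nth_mem)
    qed
  qed
qed

lemma cs_distinct: "distinct (cs n)"
  unfolding cs_def distinct_map
  by (auto simp: inj_on_def) (auto elim!: evenE oddE)

lemma cs_0: "n > 0 \<Longrightarrow> cs n ! 0 = 1" by (simp add: cs_nth)

lemma phi_step: assumes "j < 2*n" shows "cycle_of_list (cs n) (cs n ! j) = cs n ! (Suc j mod (2*n))"
proof -
  have "map (cycle_of_list (cs n)) (cs n) = rotate1 (cs n)"
    using cyclic_rotation[OF cs_distinct, of 1 n] by simp
  then have "cycle_of_list (cs n) (cs n ! j) = rotate1 (cs n) ! j"
    by (metis assms cs_len nth_map)
  also have "\<dots> = cs n ! (Suc j mod (2*n))" using assms by (simp add: nth_rotate1 cs_len)
  finally show ?thesis .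
qed

lemma phi_eq: "cycle_of_list (cs n) = phi0 n"
proof
  fix x
  show "cycle_of_list (cs n) x = phi0 n x"
  proof (cases "x \<in> set (cs n)")
    case False
    then show ?thesis using cs_set[of n] id_outside_supp[OF False]
      by (simp add: phi0_def Iset_def)
  next
    case True
    then obtain j where j: "j < 2*n" "x = cs n ! j" by (metis cs_len in_set_conv_nth)
    show ?thesis
    proof (cases "even j")
      case True
      then have "Suc j < 2*n" using j by (auto elim!: evenE)
      then show ?thesis using j True phi_step[OF j(1)]
        by (auto simp: cs_nth phi0_def Wset_def Mset_def)
    next
      case False
      show ?thesis
      proof (cases "Suc j = 2*n")
        case True
        then show ?thesis using j False phi_step[OF j(1)]
          by (auto simp: cs_nth phi0_def Wset_def Mset_def)
      next
        case F2: False
        then have "Suc j < 2*n" using j by auto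
        then show ?thesis using j False phi_step[OF j(1)]
          by (auto simp: cs_nth phi0_def Wset_def Mset_def)
      qed
    qed
  qed
qed

lemma phi_pow: assumes "j < 2*n" shows "(cycle_of_list (cs n) ^^ k) (cs n ! j) = cs n ! ((k + j) mod (2*n))"
proof -
  have "map (cycle_of_list (cs n) ^^ k) (cs n) = rotate k (cs n)"
    using cyclic_rotation[OF cs_distinct] by simp
  then have "(cycle_of_list (cs n) ^^ k) (cs n ! j) = rotate k (cs n) ! j"
    by (metis assms cs_len nth_map)
  then show ?thesis using assms by (simp add: nth_rotate cs_len)
qed

lemma phi_full: "is_full_cycle n (cycle_of_list (cs n))"
  unfolding is_full_cycle_def using cs_distinct cs_len cs_set by blast

lemma phi_order: "cycle_of_list (cs n) ^^ (2*n) = id"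
proof
  fix x
  show "(cycle_of_list (cs n) ^^ (2*n)) x = id x"
  proof (cases "x \<in> set (cs n)")
    case True
    then obtain j where j: "j < 2*n" "x = cs n ! j" by (metis cs_len in_set_conv_nth)
    then show ?thesis using phi_pow[OF j(1), of "2*n"] by simp
  next
    case False
    have "(cycle_of_list (cs n) ^^ (2*n)) permutes set (cs n)"
      by (rule permutes_funpow[OF cycle_permutes])
    then show ?thesis using False by (simp add: permutes_def)
  qed
qed



definition ordof :: "nat set \<Rightarrow> (nat \<Rightarrow> int) \<Rightarrow> nat rel" where
  "ordof A f = {(a,b). a \<in> A \<and> b \<in> A \<and> f a \<le> f b}"

definition rk :: "nat \<Rightarrow> nat \<Rightarrow> nat \<Rightarrow> int" where
  "rk n z a = (int a - int z - (if z > n then 1 else 0)) mod int n"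

definition prof :: "nat \<Rightarrow> nat \<Rightarrow> nat rel" where
  "prof n z = (if z \<in> Wset n then ordof (Mset n) (rk n z)
     else if z \<in> Mset n then ordof (Wset n) (rk n z) else {})"

lemma ordof_linear: assumes inj: "inj_on f A" shows "linear_order_on A (ordof A f)"
proof -
  have 1: "ordof A f \<subseteq> A \<times> A" by (auto simp: ordof_def)
  have 2: "refl_on A (ordof A f)" by (auto simp: ordof_def refl_on_def)
  have 3: "trans (ordof A f)" unfolding trans_def ordof_def by auto
  have 4: "antisym (ordof A f)" unfolding antisym_def ordof_def
    using inj by (auto simp: inj_on_def)
  have 5: "total_on A (ordof A f)" unfolding total_on_def ordof_def by auto
  show ?thesis using 1 2 3 4 5
    unfolding linear_order_on_def partial_order_on_def preorder_on_def by blast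
qed

lemma act_rel_ordof: assumes s: "bij s" shows "act_rel s (ordof A f) = ordof (s ` A) (f \<circ> inv s)"
proof -
  have key: "a \<in> s ` A \<longleftrightarrow> inv s a \<in> A" for a
  proof
    assume "a \<in> s ` A"
    then obtain x where "x \<in> A" "a = s x" by auto
    then show "inv s a \<in> A" using bij_is_inj[OF s] by simp
  next
    assume "inv s a \<in> A"
    moreover have "a = s (inv s a)" using bij_is_surj[OF s] by (simp add: surj_f_inv_f)
    ultimately show "a \<in> s ` A" by (metis imageI)
  qed
  show ?thesis unfolding act_rel_def ordof_def using key by auto
qed

lemma ordof_cong: "(\<And>a. a \<in> A \<Longrightarrow> f a = g a) \<Longrightarrow> ordof A f = ordof A g"
  unfolding ordof_def by auto

lemma rigid:
  assumes fin: "finite A" and inj: "inj_on (f::nat \<Rightarrow> int) A" and si: "inj_on s A" and sA: "s ` A = A"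
    and iff: "\<And>a b. a \<in> A \<Longrightarrow> b \<in> A \<Longrightarrow> f a \<le> f b \<longleftrightarrow> f (s a) \<le> f (s b)"
    and a: "a \<in> A"
  shows "s a = a"
proof -
  define r where "r x = card {b\<in>A. f b < f x}" for x
  have mono: "r x < r y" if "x \<in> A" "y \<in> A" "f x < f y" for x y
  proof -
    have "{b\<in>A. f b < f x} \<subseteq> {b\<in>A. f b < f y}" using that by auto
    moreover have "x \<in> {b\<in>A. f b < f y} - {b\<in>A. f b < f x}" using that by auto
    ultimately have "{b\<in>A. f b < f x} \<subset> {b\<in>A. f b < f y}" by blast
    moreover have "finite {b\<in>A. f b < f y}" using fin by simp
    ultimately show ?thesis unfolding r_def by (simp add: psubset_card_mono)
  qed
  have "{b\<in>A. f b < f (s a)} = s ` {b\<in>A. f b < f a}"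
  proof
    show "{b \<in> A. f b < f (s a)} \<subseteq> s ` {b \<in> A. f b < f a}"
    proof
      fix b assume b: "b \<in> {b \<in> A. f b < f (s a)}"
      then obtain c where c: "c \<in> A" "b = s c" using sA by blast
      then have "\<not> f a \<le> f c" using iff[OF a c(1)] b by auto
      then have "f c < f a" by simp
      then show "b \<in> s ` {b \<in> A. f b < f a}" using c by auto
    qed
  next
    show "s ` {b \<in> A. f b < f a} \<subseteq> {b \<in> A. f b < f (s a)}"
    proof
      fix b assume "b \<in> s ` {b \<in> A. f b < f a}"
      then obtain c where c: "c \<in> A" "f c < f a" "b = s c" by auto
      then have "\<not> f (s a) \<le> f (s c)" using iff[OF a c(1)] by auto
      then show "b \<in> {b \<in> A. f b < f (s a)}" using c sA by auto
    qed
  qed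
  then have "r (s a) = r a" unfolding r_def
    by (metis (no_types, lifting) card_image inj_on_subset mem_Collect_eq si subsetI)
  moreover have "s a \<in> A" using a sA by auto
  ultimately have "f (s a) = f a"
  proof -
    assume h: "r (s a) = r a" "s a \<in> A"
    have "\<not> f (s a) < f a" using mono[OF h(2) a] h(1) by auto
    moreover have "\<not> f a < f (s a)" using mono[OF a h(2)] h(1) by auto
    ultimately show ?thesis by simp
  qed
  then show ?thesis using inj a \<open>s a \<in> A\<close> by (auto simp: inj_on_def)
qed

lemma act_rel_comp: "bij f \<Longrightarrow> bij g \<Longrightarrow> act_rel (f \<circ> g) R = act_rel f (act_rel g R)"
  unfolding act_rel_def by (simp add: o_inv_distrib)

lemma act_profile_comp: "bij f \<Longrightarrow> bij g \<Longrightarrow> act_profile (f \<circ> g) p = act_profile f (act_profile g p)"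
  unfolding act_profile_def by (simp add: act_rel_comp o_inv_distrib)

lemma act_profile_fix_iff: assumes f: "bij f" shows "act_profile f p = p \<longleftrightarrow> (\<forall>z. p (f z) = act_rel f (p z))"
proof
  assume H: "act_profile f p = p"
  show "\<forall>z. p (f z) = act_rel f (p z)"
  proof
    fix z
    have "p (f z) = act_profile f p (f z)" using H by simp
    also have "\<dots> = act_rel f (p z)" unfolding act_profile_def using bij_is_inj[OF f] by simp
    finally show "p (f z) = act_rel f (p z)" .
  qed
next
  assume H: "\<forall>z. p (f z) = act_rel f (p z)"
  show "act_profile f p = p"
  proof
    fix z
    have "act_profile f p z = act_rel f (p (inv f z))" unfolding act_profile_def by simp
    also have "\<dots> = p (f (inv f z))" using H by simp
    also have "\<dots> = p z" using bij_is_surj[OF f] by (simp add: surj_f_inv_f)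
    finally show "act_profile f p z = p z" .
  qed
qed

lemma Gstar_comp: assumes "f \<in> Gstar n" "g \<in> Gstar n" shows "f \<circ> g \<in> Gstar n"
proof -
  have pf: "f permutes Iset n" and ef: "{f ` Wset n, f ` Mset n} = {Wset n, Mset n}"
   and pg: "g permutes Iset n" and eg: "{g ` Wset n, g ` Mset n} = {Wset n, Mset n}"
    using assms by (auto simp: Gstar_def)
  have "(g ` Wset n = Wset n \<and> g ` Mset n = Mset n) \<or> (g ` Wset n = Mset n \<and> g ` Mset n = Wset n)"
    using eg by (auto simp: doubleton_eq_iff)
  moreover have "(f ` Wset n = Wset n \<and> f ` Mset n = Mset n) \<or> (f ` Wset n = Mset n \<and> f ` Mset n = Wset n)"
    using ef by (auto simp: doubleton_eq_iff)
  ultimately have "{f ` (g ` Wset n), f ` (g ` Mset n)} = {Wset n, Mset n}"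
    by (elim disjE conjE) (simp_all add: insert_commute)
  then have "{(f \<circ> g) ` Wset n, (f \<circ> g) ` Mset n} = {Wset n, Mset n}"
    by (simp add: image_comp)
  then show ?thesis using permutes_compose[OF pg pf] by (simp add: Gstar_def)
qed

lemma Stab_comp: assumes "f \<in> Stab n p" "g \<in> Stab n p" shows "f \<circ> g \<in> Stab n p"
proof -
  have "bij f" "bij g" using assms by (auto simp: Stab_def Gstar_def permutes_bij)
  then show ?thesis using assms Gstar_comp by (auto simp: Stab_def act_profile_comp)
qed

lemma dvd_small: assumes "(n::int) dvd d" "\<bar>d\<bar> < n" shows "d = 0"
proof (rule ccontr)
  assume "d \<noteq> 0"
  then have "\<bar>n\<bar> \<le> \<bar>d\<bar>" using dvd_imp_le_int assms(1) by blast
  then show False using assms(2) by linarith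
qed

lemma modinj: assumes "(x - c) mod (m::int) = (y - c) mod m" "\<bar>x - y\<bar> < m" shows "x = y"
proof -
  have "m dvd (x - c) - (y - c)" using assms(1) mod_eq_dvd_iff by blast
  then have "m dvd x - y" by simp
  then show ?thesis using dvd_small assms(2) by fastforce
qed

lemma modeqI: assumes "(x::int) - y = m * k" shows "x mod m = y mod m"
proof -
  have "m dvd x - y" using assms by (metis dvd_triv_left)
  then show ?thesis using mod_eq_dvd_iff by blast
qed

lemma rk_inj_M: "inj_on (rk n z) (Mset n)"
proof (rule inj_onI)
  fix a b assume a: "a \<in> Mset n" and b: "b \<in> Mset n" and e: "rk n z a = rk n z b"
  have "\<bar>int a - int b\<bar> < int n" using a b by (auto simp: Mset_def)
  then show "a = b" using e modinj unfolding rk_def by (metis diff_diff_eq of_nat_eq_iff)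
qed

lemma rk_inj_W: "inj_on (rk n z) (Wset n)"
proof (rule inj_onI)
  fix a b assume a: "a \<in> Wset n" and b: "b \<in> Wset n" and e: "rk n z a = rk n z b"
  have "\<bar>int a - int b\<bar> < int n" using a b by (auto simp: Wset_def)
  then show "a = b" using e modinj unfolding rk_def by (metis diff_diff_eq of_nat_eq_iff)
qed

lemma rk_shift_W: assumes x: "x \<in> Wset n" and a: "a \<in> Mset n"
  shows "rk n (phi0 n x) (phi0 n a) = rk n x a"
proof -
  have xn: "1 \<le> x" "x \<le> n" using x by (auto simp: Wset_def)
  have an: "n+1 \<le> a" "a \<le> 2*n" using a by (auto simp: Mset_def)
  have px: "phi0 n x = n + x" using x by (simp add: phi0_def)
  have c1: "n < n + x" "\<not> x > n" using xn by auto
  show ?thesis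
  proof (cases "a = 2*n")
    case True
    then have pa: "phi0 n a = 1" using a xn by (auto simp: phi0_def Wset_def Mset_def)
    have "\<not> 1 > n" using xn by auto
    then show ?thesis unfolding rk_def px pa using c1 True
      by (intro modeqI[where k="-3"]) (simp add: algebra_simps)
  next
    case False
    then have pa: "phi0 n a = a - n + 1" using a xn by (auto simp: phi0_def Wset_def Mset_def)
    have ia: "int (a - n + 1) = int a - int n + 1" using an by simp
    have "\<not> a - n + 1 > n" using an False by auto
    then show ?thesis unfolding rk_def px pa ia using c1
      by (intro modeqI[where k="-2"]) (simp add: algebra_simps)
  qed
qed

lemma rk_shift_M: assumes x: "x \<in> Mset n" and a: "a \<in> Wset n"
  shows "rk n (phi0 n x) (phi0 n a) = rk n x a"
proof -
  have an: "1 \<le> a" "a \<le> n" using a by (auto simp: Wset_def)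
  have xn: "n+1 \<le> x" "x \<le> 2*n" using x by (auto simp: Mset_def)
  have pa: "phi0 n a = n + a" using a by (simp add: phi0_def)
  have c1: "n < x" "\<not> a > n" using xn an by auto
  show ?thesis
  proof (cases "x = 2*n")
    case True
    then have px: "phi0 n x = 1" using x an by (auto simp: phi0_def Wset_def Mset_def)
    have "\<not> 1 > n" using an by auto
    then show ?thesis unfolding rk_def px pa using c1 True
      by (intro modeqI[where k="3"]) (simp add: algebra_simps)
  next
    case False
    then have px: "phi0 n x = x - n + 1" using x an by (auto simp: phi0_def Wset_def Mset_def)
    have ix: "int (x - n + 1) = int x - int n + 1" using xn by simp
    have "\<not> x - n + 1 > n" using xn False by auto
    then show ?thesis unfolding rk_def px pa ix using c1
      by (intro modeqI[where k="2"]) (simp add: algebra_simps)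
  qed
qed



lemma WM_disj: "x \<in> Wset n \<Longrightarrow> x \<notin> Mset n" by (auto simp: Wset_def Mset_def)

lemma prof_W: "x \<in> Wset n \<Longrightarrow> prof n x = ordof (Mset n) (rk n x)" by (simp add: prof_def)
lemma prof_M: "x \<in> Mset n \<Longrightarrow> prof n x = ordof (Wset n) (rk n x)"
  using WM_disj by (auto simp: prof_def)
lemma prof_out: "x \<notin> Iset n \<Longrightarrow> prof n x = {}" by (auto simp: prof_def Iset_def)

lemma prof_in: "prof n \<in> profiles n"
  unfolding profiles_def using prof_W prof_M prof_out ordof_linear rk_inj_M rk_inj_W by simp

lemma finW: "finite (Wset n)" by (simp add: Wset_def)
lemma finM: "finite (Mset n)" by (simp add: Mset_def)

lemma phi0_WM: "phi0 n ` Wset n = Mset n"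
proof
  show "phi0 n ` Wset n \<subseteq> Mset n" by (auto simp: phi0_def Wset_def Mset_def)
  show "Mset n \<subseteq> phi0 n ` Wset n"
  proof
    fix m assume m: "m \<in> Mset n"
    then have "m - n \<in> Wset n" "phi0 n (m - n) = m" by (auto simp: phi0_def Wset_def Mset_def)
    then show "m \<in> phi0 n ` Wset n" by (metis imageI)
  qed
qed

lemma phi0_MW: assumes "n \<ge> 1" shows "phi0 n ` Mset n = Wset n"
proof
  show "phi0 n ` Mset n \<subseteq> Wset n" by (auto simp: phi0_def Wset_def Mset_def)
  show "Wset n \<subseteq> phi0 n ` Mset n"
  proof
    fix w assume w: "w \<in> Wset n"
    show "w \<in> phi0 n ` Mset n"
    proof (cases "w = 1")
      case True
      then have "2*n \<in> Mset n" "phi0 n (2*n) = w" using assms by (auto simp: phi0_def Wset_def Mset_def)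
      then show ?thesis by (metis imageI)
    next
      case False
      then have "w + n - 1 \<in> Mset n" "phi0 n (w + n - 1) = w" using w by (auto simp: phi0_def Wset_def Mset_def)
      then show ?thesis by (metis imageI)
    qed
  qed
qed

lemma phi0_perm: "phi0 n permutes Iset n"
  using cycle_permutes[of "cs n"] by (simp add: phi_eq cs_set)

lemma phi0_Gstar: "n \<ge> 1 \<Longrightarrow> phi0 n \<in> Gstar n"
  unfolding Gstar_def using phi0_perm phi0_WM phi0_MW by (auto simp: insert_commute)

lemma inv_in: assumes "bij f" "f ` A = B" "b \<in> B" shows "inv f b \<in> A" "f (inv f b) = b"
proof -
  obtain a where "a \<in> A" "b = f a" using assms by auto
  then show "inv f b \<in> A" using bij_is_inj[OF assms(1)] by simp
  show "f (inv f b) = b" using bij_is_surj[OF assms(1)] by (simp add: surj_f_inv_f)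
qed

lemma phi0_fix: assumes n: "n \<ge> 1" shows "act_profile (phi0 n) (prof n) = prof n"
proof -
  have bij: "bij (phi0 n)" using phi0_perm permutes_bij by blast
  have "prof n (phi0 n z) = act_rel (phi0 n) (prof n z)" for z
  proof -
    consider "z \<in> Wset n" | "z \<in> Mset n" | "z \<notin> Iset n" by (auto simp: Iset_def)
    then show ?thesis
    proof cases
      case 1
      then have pz: "phi0 n z \<in> Mset n" using phi0_WM by blast
      have "act_rel (phi0 n) (prof n z) = ordof (Wset n) (rk n z \<circ> inv (phi0 n))"
        using prof_W[OF 1] act_rel_ordof[OF bij] phi0_MW[OF n] by simp
      also have "\<dots> = ordof (Wset n) (rk n (phi0 n z))"
      proof (rule ordof_cong)
        fix b assume b: "b \<in> Wset n"
        note ii = inv_in[OF bij phi0_MW[OF n] b]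
        show "(rk n z \<circ> inv (phi0 n)) b = rk n (phi0 n z) b"
          using rk_shift_W[OF 1 ii(1)] ii(2) by simp
      qed
      finally show ?thesis using prof_M[OF pz] by simp
    next
      case 2
      then have pz: "phi0 n z \<in> Wset n" using phi0_MW[OF n] by blast
      have "act_rel (phi0 n) (prof n z) = ordof (Mset n) (rk n z \<circ> inv (phi0 n))"
        using prof_M[OF 2] act_rel_ordof[OF bij] phi0_WM by simp
      also have "\<dots> = ordof (Mset n) (rk n (phi0 n z))"
      proof (rule ordof_cong)
        fix b assume b: "b \<in> Mset n"
        note ii = inv_in[OF bij phi0_WM b]
        show "(rk n z \<circ> inv (phi0 n)) b = rk n (phi0 n z) b"
          using rk_shift_M[OF 2 ii(1)] ii(2) by simp
      qed
      finally show ?thesis using prof_W[OF pz] by simp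
    next
      case 3
      then have "phi0 n z = z" using phi0_perm by (simp add: permutes_def)
      then show ?thesis using prof_out[OF 3] by (simp add: act_rel_def)
    qed
  qed
  then show ?thesis using act_profile_fix_iff[OF bij] by blast
qed

lemma pow_Stab: assumes n: "n \<ge> 1" shows "phi0 n ^^ k \<in> Stab n (prof n)"
proof (induction k)
  case 0
  have "id \<in> Gstar n" by (auto simp: Gstar_def permutes_id)
  moreover have "act_profile id (prof n) = prof n"
    by (auto simp: act_profile_def act_rel_def inv_id)
  ultimately have "id \<in> Stab n (prof n)" unfolding Stab_def by blast
  then show ?case unfolding funpow.simps(1) .
next
  case (Suc k)
  have "phi0 n \<in> Stab n (prof n)" using phi0_Gstar[OF n] phi0_fix[OF n] by (simp add: Stab_def)
  then show ?case unfolding funpow.simps(2) by (rule Stab_comp[OF _ Suc])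
qed

lemma fix_on:
  assumes bij: "bij c" and cA: "c ` A = A" and fin: "finite A" and inj: "inj_on f A"
    and eq: "ordof A f = act_rel c (ordof A f)" and a: "a \<in> A"
  shows "c a = a"
proof -
  have e2: "ordof A f = ordof A (f \<circ> inv c)" using eq act_rel_ordof[OF bij] cA by simp
  have si: "inj_on (inv c) A" using bij_is_inj[OF bij_imp_bij_inv[OF bij]] inj_on_subset by blast
  have sA: "inv c ` A = A" using cA image_inv_f_f[OF bij_is_inj[OF bij], of A] by simp
  have iff: "f x \<le> f y \<longleftrightarrow> f (inv c x) \<le> f (inv c y)" if "x \<in> A" "y \<in> A" for x y
  proof -
    have "(x, y) \<in> ordof A f \<longleftrightarrow> (x, y) \<in> ordof A (f \<circ> inv c)" using e2 by simp
    then show ?thesis using that by (simp add: ordof_def)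
  qed
  have "inv c a = a" by (rule rigid[OF fin inj si sA iff a])
  then show ?thesis using bij by (metis bij_inv_eq_iff)
qed

lemma stab_fix1: assumes n: "n \<ge> 1" and c: "c \<in> Stab n (prof n)" and c1: "c 1 = 1"
  shows "c = id"
proof -
  have perm: "c permutes Iset n" and dbl: "{c ` Wset n, c ` Mset n} = {Wset n, Mset n}"
    and fx: "act_profile c (prof n) = prof n" using c by (auto simp: Stab_def Gstar_def)
  have bij: "bij c" using perm permutes_bij by blast
  have 1: "1 \<in> Wset n" using n by (simp add: Wset_def)
  then have "1 \<in> c ` Wset n" using c1 by (metis imageI)
  then have "c ` Wset n \<noteq> Mset n" using WM_disj[OF 1] by auto
  then have cW: "c ` Wset n = Wset n" and cM: "c ` Mset n = Mset n" using dbl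
    by (auto simp: doubleton_eq_iff)
  have pf: "prof n (c z) = act_rel c (prof n z)" for z using fx act_profile_fix_iff[OF bij] by blast
  have onM: "c a = a" if "a \<in> Mset n" for a
  proof (rule fix_on[OF bij cM finM rk_inj_M _ that])
    show "ordof (Mset n) (rk n 1) = act_rel c (ordof (Mset n) (rk n 1))"
      using pf[of 1] c1 prof_W[OF 1] by simp
  qed
  have m: "n + 1 \<in> Mset n" using n by (simp add: Mset_def)
  have onW: "c a = a" if "a \<in> Wset n" for a
  proof (rule fix_on[OF bij cW finW rk_inj_W _ that])
    show "ordof (Wset n) (rk n (n+1)) = act_rel c (ordof (Wset n) (rk n (n+1)))"
      using pf[of "n+1"] onM[OF m] prof_M[OF m] by simp
  qed
  show ?thesis
  proof
    fix x show "c x = id x"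
    proof (cases "x \<in> Iset n")
      case True then show ?thesis using onW onM by (auto simp: Iset_def)
    next
      case False then show ?thesis using perm by (simp add: permutes_def)
    qed
  qed
qed

theorem proposition16:
  fixes n :: nat
  assumes "n \<ge> 2"
  shows "\<exists>p \<in> profiles n. \<exists>\<phi>. is_full_cycle n \<phi> \<and> Stab n p = gen_cyclic \<phi>"
proof -
  have n: "n \<ge> 1" using assms by simp
  define \<phi> where "\<phi> = cycle_of_list (cs n)"
  have pe: "\<phi> = phi0 n" by (simp add: \<phi>_def phi_eq)
  have "Stab n (prof n) = gen_cyclic \<phi>"
  proof
    show "gen_cyclic \<phi> \<subseteq> Stab n (prof n)"
      unfolding gen_cyclic_def pe using pow_Stab[OF n] by auto
  next
    show "Stab n (prof n) \<subseteq> gen_cyclic \<phi>"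
    proof
      fix \<psi> assume ps: "\<psi> \<in> Stab n (prof n)"
      then have perm: "\<psi> permutes Iset n" by (simp add: Stab_def Gstar_def)
      have "1 \<in> Iset n" using n by (simp add: Iset_def Wset_def)
      then have "\<psi> 1 \<in> set (cs n)" using perm cs_set by (simp add: permutes_in_image)
      then obtain j where j: "j < 2*n" "\<psi> 1 = cs n ! j" by (metis cs_len in_set_conv_nth)
      have "(\<phi> ^^ j) 1 = \<psi> 1"
        using phi_pow[of 0 n j] n j unfolding \<phi>_def by (simp add: cs_0)
      define c where "c = \<phi> ^^ (2*n - j) \<circ> \<psi>"
      have ord: "\<phi> ^^ (2*n) = id" unfolding \<phi>_def by (rule phi_order)
      have "c 1 = (\<phi> ^^ (2*n - j)) ((\<phi> ^^ j) 1)" using \<open>(\<phi> ^^ j) 1 = \<psi> 1\<close> by (simp add: c_def)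
      also have "\<dots> = (\<phi> ^^ (2*n - j + j)) 1" by (simp add: funpow_add)
      also have "\<dots> = 1" using j ord by simp
      finally have c1: "c 1 = 1" .
      have cS: "c \<in> Stab n (prof n)" unfolding c_def pe
        using Stab_comp[OF pow_Stab[OF n] ps] by simp
      then have cid: "c = id" using stab_fix1[OF n cS c1] by simp
      have "\<psi> = \<phi> ^^ (2*n) \<circ> \<psi>" using ord by simp
      also have "\<dots> = (\<phi> ^^ j \<circ> \<phi> ^^ (2*n - j)) \<circ> \<psi>"
        using j by (simp add: funpow_add[symmetric])
      also have "\<dots> = \<phi> ^^ j \<circ> c" by (simp add: c_def o_assoc)
      also have "\<dots> = \<phi> ^^ j" using cid by simp
      finally show "\<psi> \<in> gen_cyclic \<phi>" by (simp add: gen_cyclic_def)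
    qed
  qed
  moreover have "is_full_cycle n \<phi>" unfolding \<phi>_def by (rule phi_full)
  ultimately show ?thesis using prof_in by blast
qed

end
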